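(* Let $k\geq 3$ and let $G$ be a diregular $(2,k,+3)$-digraph. Let $u,v$ be distinct vertices with exactly one common out-neighbour $u_2$, and write $N^+(u)=\{u_1,u_2\}$, $N^+(v)=\{v_1,u_2\}$. Then $v_1\in N^{k-1}(u_1)\cup O(u)$ and $u_1\in N^{k-1}(v_1)\cup O(v)$.
   Context: A digraph is $k$-geodetic if for every ordered pair of vertices $x,y$ there is at most one directed path from $x$ to $y$ of length at most $k$ (the trivial path counts). A diregular $(2,k,+3)$-digraph is a $k$-geodetic digraph of order $1+2+\dots+2^k+3$ in which every vertex has in- and out-degree $2$. $N^+(x)$ is the set of out-neighbours of $x$; $N^l(x)$ is the set of end-vertices of directed paths of length $l$ starting at $x$. $d(x,y)$ is the directed distance; $O(x)=\{y: d(x,y)\geq k+1\}$ is the outlier set of $x$. *)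

theory Defs
  imports Main "HOL-Library.Extended_Nat"
begin

text \<open>A walk is a nonempty list of vertices with consecutive
  vertices joined by arcs; its length is the number of arcs.\<close>

definition is_walk :: "('a \<times> 'a) set \<Rightarrow> 'a list \<Rightarrow> bool" where
  "is_walk A xs \<longleftrightarrow> xs \<noteq> [] \<and> (\<forall>i. Suc i < length xs \<longrightarrow> (xs ! i, xs ! Suc i) \<in> A)"

definition walk_from_to :: "('a \<times> 'a) set \<Rightarrow> 'a \<Rightarrow> 'a \<Rightarrow> 'a list \<Rightarrow> bool" where
  "walk_from_to A x y xs \<longleftrightarrow> is_walk A xs \<and> hd xs = x \<and> last xs = y"

definition out_nbrs :: "('a \<times> 'a) set \<Rightarrow> 'a \<Rightarrow> 'a set" where
  "out_nbrs A x = {y. (x, y) \<in> A}"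

definition in_nbrs :: "('a \<times> 'a) set \<Rightarrow> 'a \<Rightarrow> 'a set" where
  "in_nbrs A x = {y. (y, x) \<in> A}"

definition N_l :: "('a \<times> 'a) set \<Rightarrow> nat \<Rightarrow> 'a \<Rightarrow> 'a set" where
  "N_l A l x = {y. \<exists>xs. walk_from_to A x y xs \<and> length xs = Suc l}"

text \<open>Directed distance (infinite if y is unreachable from x).\<close>
definition ddist :: "('a \<times> 'a) set \<Rightarrow> 'a \<Rightarrow> 'a \<Rightarrow> enat" where
  "ddist A x y = (INF l \<in> {l. y \<in> N_l A l x}. enat l)"

definition outlier_set :: "'a set \<Rightarrow> ('a \<times> 'a) set \<Rightarrow> nat \<Rightarrow> 'a \<Rightarrow> 'a set" where
  "outlier_set V A k x = {y \<in> V. ddist A x y \<ge> enat (k + 1)}"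

definition digraph :: "'a set \<Rightarrow> ('a \<times> 'a) set \<Rightarrow> bool" where
  "digraph V A \<longleftrightarrow> finite V \<and> A \<subseteq> V \<times> V"

text \<open>k-geodetic: for all x, y at most one walk of length \<le> k from x to y
  (the trivial walk counts).\<close>
definition k_geodetic :: "'a set \<Rightarrow> ('a \<times> 'a) set \<Rightarrow> nat \<Rightarrow> bool" where
  "k_geodetic V A k \<longleftrightarrow> (\<forall>x\<in>V. \<forall>y\<in>V. \<forall>p q.
      walk_from_to A x y p \<and> length p \<le> Suc k \<and>
      walk_from_to A x y q \<and> length q \<le> Suc k \<longrightarrow> p = q)"

definition diregular :: "'a set \<Rightarrow> ('a \<times> 'a) set \<Rightarrow> nat \<Rightarrow> bool" where
  "diregular V A d \<longleftrightarrow> (\<forall>x\<in>V. card (out_nbrs A x) = d \<and> card (in_nbrs A x) = d)"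

definition two_k_plus3_digraph :: "'a set \<Rightarrow> ('a \<times> 'a) set \<Rightarrow> nat \<Rightarrow> bool" where
  "two_k_plus3_digraph V A k \<longleftrightarrow> digraph V A \<and> k_geodetic V A k \<and> diregular V A 2 \<and>
      card V = (\<Sum>i\<le>k. 2 ^ i) + 3"

end

theory Submission
  imports Defs
begin


lemma walk_cons: "is_walk A p \<Longrightarrow> (x, hd p) \<in> A \<Longrightarrow> is_walk A (x#p)"
  unfolding is_walk_def
  by (auto simp: nth_Cons hd_conv_nth split: nat.split)

lemma walk_tl: "is_walk A p \<Longrightarrow> length p \<ge> 2 \<Longrightarrow> is_walk A (tl p) \<and> (hd p, hd (tl p)) \<in> A"
proof -
  assume h: "is_walk A p" "length p \<ge> 2"
  obtain a b q where p: "p = a # b # q" using h(2)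
    by (cases p; cases "tl p") auto
  have "(p ! 0, p ! Suc 0) \<in> A" using h unfolding is_walk_def p by auto
  moreover have "\<forall>i. Suc i < length (b#q) \<longrightarrow> ((b#q) ! i, (b#q) ! Suc i) \<in> A"
  proof (intro allI impI)
    fix i assume "Suc i < length (b#q)"
    hence "Suc (Suc i) < length p" using p by simp
    hence "(p ! Suc i, p ! Suc (Suc i)) \<in> A" using h unfolding is_walk_def by blast
    thus "((b#q) ! i, (b#q) ! Suc i) \<in> A" using p by simp
  qed
  ultimately show ?thesis unfolding p is_walk_def by simp
qed

lemma N0: "z \<in> N_l A 0 x \<longleftrightarrow> z = x"
proof
  assume "z = x"
  thus "z \<in> N_l A 0 x" unfolding N_l_def walk_from_to_def is_walk_def
    by (intro CollectI exI[of _ "[x]"]) auto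
qed (auto simp: N_l_def walk_from_to_def length_Suc_conv)

lemma N_Suc: "z \<in> N_l A (Suc l) x \<longleftrightarrow> (\<exists>y. (x,y)\<in>A \<and> z \<in> N_l A l y)"
proof
  assume "z \<in> N_l A (Suc l) x"
  then obtain p where p: "is_walk A p" "hd p = x" "last p = z" "length p = Suc (Suc l)"
    unfolding N_l_def walk_from_to_def by auto
  have t: "is_walk A (tl p) \<and> (hd p, hd (tl p)) \<in> A" using walk_tl[OF p(1)] p(4) by simp
  have "tl p \<noteq> []" using p(4) by (cases p) auto
  hence "last (tl p) = z" using p(3) by (metis last_tl)
  hence "z \<in> N_l A l (hd (tl p))" unfolding N_l_def walk_from_to_def using t p(4) by auto
  thus "\<exists>y. (x,y)\<in>A \<and> z \<in> N_l A l y" using t p(2) by blast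
next
  assume "\<exists>y. (x,y)\<in>A \<and> z \<in> N_l A l y"
  then obtain y q where q: "(x,y) \<in> A" "is_walk A q" "hd q = y" "last q = z" "length q = Suc l"
    unfolding N_l_def walk_from_to_def by auto
  have "is_walk A (x#q)" using walk_cons[OF q(2)] q(1,3) by simp
  moreover have "q \<noteq> []" using q(5) by auto
  ultimately show "z \<in> N_l A (Suc l) x" unfolding N_l_def walk_from_to_def using q by auto
qed

lemma N_trans: "y \<in> N_l A i x \<Longrightarrow> z \<in> N_l A j y \<Longrightarrow> z \<in> N_l A (i+j) x"
proof (induction i arbitrary: x)
  case 0 thus ?case by (simp add: N0)
next
  case (Suc i)
  then obtain w where "(x,w)\<in>A" "y \<in> N_l A i w" using N_Suc by metis
  thus ?case using Suc N_Suc by fastforce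
qed

lemma N_in_V: "digraph V A \<Longrightarrow> x \<in> V \<Longrightarrow> z \<in> N_l A l x \<Longrightarrow> z \<in> V"
proof (induction l arbitrary: x)
  case 0 thus ?case by (simp add: N0)
next
  case (Suc l)
  then obtain w where "(x,w)\<in>A" "z \<in> N_l A l w" using N_Suc by metis
  thus ?case using Suc unfolding digraph_def by blast
qed

lemma geoA:
  assumes "digraph V A" "k_geodetic V A k" "x \<in> V" "y \<in> N_l A i x" "y \<in> N_l A j x"
    "i \<le> k" "j \<le> k" "i \<noteq> j"
  shows False
proof -
  have "y \<in> V" using N_in_V assms by metis
  obtain p q where pq: "walk_from_to A x y p" "length p = Suc i" "walk_from_to A x y q" "length q = Suc j"
    using assms(4,5) unfolding N_l_def by auto
  have "\<forall>p q. walk_from_to A x y p \<and> length p \<le> Suc k \<and> walk_from_to A x y q \<and> length q \<le> Suc k \<longrightarrow> p = q"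
    using assms(2,3) `y \<in> V` unfolding k_geodetic_def by blast
  moreover have "length p \<le> Suc k" "length q \<le> Suc k" using assms(6,7) pq by simp_all
  ultimately have "p = q" using pq by blast
  thus False using pq assms(8) by simp
qed

lemma geoB:
  assumes "digraph V A" "k_geodetic V A k" "x \<in> V" "(x,a) \<in> A" "(x,b) \<in> A" "a \<noteq> b"
    "y \<in> N_l A i a" "y \<in> N_l A j b" "i < k" "j < k"
  shows False
proof -
  have "a \<in> V" using assms unfolding digraph_def by auto
  have "y \<in> V" using N_in_V assms `a \<in> V` by metis
  obtain p q where p: "walk_from_to A a y p" "length p = Suc i" and q: "walk_from_to A b y q" "length q = Suc j"
    using assms(7,8) unfolding N_l_def by auto
  have pw: "is_walk A p" "hd p = a" "last p = y" "p \<noteq> []" using p unfolding walk_from_to_def by auto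
  have qw: "is_walk A q" "hd q = b" "last q = y" "q \<noteq> []" using q unfolding walk_from_to_def by auto
  have "is_walk A (x#p)" using walk_cons[OF pw(1)] assms(4) pw(2) by simp
  hence "walk_from_to A x y (x#p)" using pw unfolding walk_from_to_def by simp
  moreover have "is_walk A (x#q)" using walk_cons[OF qw(1)] assms(5) qw(2) by simp
  hence "walk_from_to A x y (x#q)" using qw unfolding walk_from_to_def by simp
  moreover have "\<forall>p q. walk_from_to A x y p \<and> length p \<le> Suc k \<and> walk_from_to A x y q \<and> length q \<le> Suc k \<longrightarrow> p = q"
    using assms(2,3) `y \<in> V` unfolding k_geodetic_def by blast
  moreover have "length (x#p) \<le> Suc k" "length (x#q) \<le> Suc k" using assms(9,10) p(2) q(2) by simp_all
  ultimately have "x#p = x#q" by blast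
  thus False using pw(2) qw(2) assms(6) by simp
qed

lemma N_finite: "digraph V A \<Longrightarrow> x \<in> V \<Longrightarrow> finite (N_l A l x)"
  using N_in_V unfolding digraph_def by (metis finite_subset subsetI)

lemma N_Suc_set: "N_l A (Suc l) x = (\<Union>y\<in>out_nbrs A x. N_l A l y)"
  using N_Suc unfolding out_nbrs_def by fastforce

lemma card_N:
  assumes "digraph V A" "k_geodetic V A k" "diregular V A 2"
  shows "x \<in> V \<Longrightarrow> l \<le> k \<Longrightarrow> card (N_l A l x) = 2^l"
proof (induction l arbitrary: x)
  case 0
  have "N_l A 0 x = {x}" using N0 by fast
  thus ?case by simp
next
  case (Suc l)
  have co: "card (out_nbrs A x) = 2" using assms(3) Suc.prems(1) unfolding diregular_def by blast
  hence fo: "finite (out_nbrs A x)" using card.infinite by fastforce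
  have oV: "\<And>y. y \<in> out_nbrs A x \<Longrightarrow> y \<in> V" using assms(1) unfolding digraph_def out_nbrs_def by blast
  have lk: "l < k" using Suc.prems(2) by simp
  have disj: "N_l A l a \<inter> N_l A l b = {}" if ab: "a \<in> out_nbrs A x" "b \<in> out_nbrs A x" "a \<noteq> b" for a b
  proof (rule ccontr)
    assume "N_l A l a \<inter> N_l A l b \<noteq> {}"
    then obtain y where y1: "y \<in> N_l A l a" and y2: "y \<in> N_l A l b" by blast
    have xa: "(x,a) \<in> A" "(x,b) \<in> A" using ab(1,2) unfolding out_nbrs_def by simp_all
    show False by (rule geoB[OF assms(1,2) Suc.prems(1) xa ab(3) y1 y2 lk lk])
  qed
  have "card (\<Union>y\<in>out_nbrs A x. N_l A l y) = (\<Sum>y\<in>out_nbrs A x. card (N_l A l y))"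
    by (rule card_UN_disjoint[OF fo]) (use N_finite[OF assms(1) oV] disj in blast)+
  also have "\<dots> = (\<Sum>y\<in>out_nbrs A x. 2^l)"
    by (rule sum.cong[OF refl]) (use Suc.IH[OF oV] Suc.prems(2) in simp)
  also have "\<dots> = 2^Suc l" using co by simp
  finally have "card (\<Union>y\<in>out_nbrs A x. N_l A l y) = 2^Suc l" .
  moreover have "N_l A (Suc l) x = (\<Union>y\<in>out_nbrs A x. N_l A l y)" by (rule N_Suc_set)
  ultimately show ?case by simp
qed

lemma card_T:
  assumes "digraph V A" "k_geodetic V A k" "diregular V A 2" "x \<in> V"
  shows "card (\<Union>i\<in>{..k}. N_l A i x) = (\<Sum>i\<le>k. 2^i)"
proof -
  have "card (\<Union>i\<in>{..k}. N_l A i x) = (\<Sum>i\<le>k. card (N_l A i x))"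
  proof (rule card_UN_disjoint)
    show "\<forall>i\<in>{..k}. finite (N_l A i x)" using N_finite[OF assms(1,4)] by blast
    show "\<forall>i\<in>{..k}. \<forall>j\<in>{..k}. i \<noteq> j \<longrightarrow> N_l A i x \<inter> N_l A j x = {}"
    proof (intro ballI impI)
      fix i j assume ij: "i \<in> {..k}" "j \<in> {..k}" "i \<noteq> j"
      show "N_l A i x \<inter> N_l A j x = {}"
      proof (rule ccontr)
        assume "N_l A i x \<inter> N_l A j x \<noteq> {}"
        then obtain y where y: "y \<in> N_l A i x" "y \<in> N_l A j x" by blast
        show False by (rule geoA[OF assms(1,2,4) y]) (use ij in auto)
      qed
    qed
  qed simp
  also have "\<dots> = (\<Sum>i\<le>k. 2^i)" by (rule sum.cong[OF refl]) (use card_N[OF assms(1-3) assms(4)] in simp)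
  finally show ?thesis .
qed

lemma outlier_eq: "digraph V A \<Longrightarrow> x \<in> V \<Longrightarrow>
  outlier_set V A k x = V - (\<Union>i\<in>{..k}. N_l A i x)"
proof -
  have "ddist A x y \<ge> enat (k+1) \<longleftrightarrow> (\<forall>l\<le>k. y \<notin> N_l A l x)" for y
  proof
    assume h: "ddist A x y \<ge> enat (k+1)"
    show "\<forall>l\<le>k. y \<notin> N_l A l x"
    proof (intro allI impI notI)
      fix l assume "l \<le> k" "y \<in> N_l A l x"
      hence "ddist A x y \<le> enat l" unfolding ddist_def by (auto intro: INF_lower)
      hence "enat (k+1) \<le> enat l" using h by (rule order_trans[rotated])
      thus False using `l \<le> k` by simp
    qed
  next
    assume h: "\<forall>l\<le>k. y \<notin> N_l A l x"
    show "ddist A x y \<ge> enat (k+1)" unfolding ddist_def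
    proof (rule INF_greatest)
      fix l assume "l \<in> {l. y \<in> N_l A l x}"
      hence "\<not> l \<le> k" using h by blast
      thus "enat (k+1) \<le> enat l" by simp
    qed
  qed
  moreover assume "digraph V A" "x \<in> V"
  ultimately show ?thesis unfolding outlier_set_def by auto
qed

lemma card_O:
  assumes "two_k_plus3_digraph V A k" "x \<in> V"
  shows "card (outlier_set V A k x) = 3" "finite (outlier_set V A k x)"
proof -
  have a: "digraph V A" "k_geodetic V A k" "diregular V A 2" "card V = (\<Sum>i\<le>k. 2 ^ i) + 3"
    using assms(1) unfolding two_k_plus3_digraph_def by auto
  have sub: "(\<Union>i\<in>{..k}. N_l A i x) \<subseteq> V" using N_in_V[OF a(1) assms(2)] by blast
  have fV: "finite V" using a(1) unfolding digraph_def by auto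
  have "card (V - (\<Union>i\<in>{..k}. N_l A i x)) = card V - card (\<Union>i\<in>{..k}. N_l A i x)"
    by (rule card_Diff_subset[OF finite_subset[OF sub fV] sub])
  thus "card (outlier_set V A k x) = 3" using outlier_eq[OF a(1) assms(2)] card_T[OF a(1-3) assms(2)] a(4) by simp
  show "finite (outlier_set V A k x)" using fV unfolding outlier_set_def by simp
qed

lemma inT:
  assumes "digraph V A" "u \<in> V" "z \<in> V" "z \<notin> outlier_set V A k u" "z \<noteq> u"
  shows "\<exists>w i. (u,w) \<in> A \<and> i < k \<and> z \<in> N_l A i w"
proof -
  obtain i where "i \<le> k" "z \<in> N_l A i u" using outlier_eq[OF assms(1,2)] assms(3,4) by auto
  then obtain i' where i': "i = Suc i'" using assms(5) by (cases i) (auto simp: N0)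
  hence "z \<in> N_l A (Suc i') u" using `z \<in> N_l A i u` by simp
  then obtain w where "(u,w) \<in> A" "z \<in> N_l A i' w" using N_Suc[of z A i' u] by blast
  moreover have "i' < k" using i' `i \<le> k` by simp
  ultimately show ?thesis by blast
qed


lemma half:
  fixes V :: "'a set" and A :: "('a \<times> 'a) set" and k :: nat
    and u v u1 u2 v1 :: 'a
  assumes "k \<ge> 3"
    and G: "two_k_plus3_digraph V A k"
    and "u \<in> V" and "v \<in> V" and "u \<noteq> v"
    and "out_nbrs A u \<inter> out_nbrs A v = {u2}"
    and ou: "out_nbrs A u = {u1, u2}"
    and ov: "out_nbrs A v = {v1, u2}"
  shows "v1 \<in> N_l A (k - 1) u1 \<union> outlier_set V A k u"
proof (rule ccontr)
  assume neg: "v1 \<notin> N_l A (k - 1) u1 \<union> outlier_set V A k u"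
  have D: "digraph V A" and K: "k_geodetic V A k" and R: "diregular V A 2"
    using G unfolding two_k_plus3_digraph_def by auto
  note gA = geoA[OF D K] and gB = geoB[OF D K]
  have a: "(u,u1) \<in> A" "(u,u2) \<in> A" "(v,v1) \<in> A" "(v,u2) \<in> A"
    using ou ov unfolding out_nbrs_def by auto
  have "card (out_nbrs A u) = 2" "card (out_nbrs A v) = 2" using R assms unfolding diregular_def by auto
  hence ne: "u1 \<noteq> u2" "v1 \<noteq> u2" using ou ov by auto
  have ne2: "u1 \<noteq> v1" using assms(6) ou ov ne by auto
  have V: "u1 \<in> V" "u2 \<in> V" "v1 \<in> V" using a D unfolding digraph_def by auto
  have N1: "\<And>x y. (x,y) \<in> A \<Longrightarrow> y \<in> N_l A 1 x" using N_Suc N0 by (metis One_nat_def)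
  have N00: "\<And>x. x \<in> N_l A 0 x" using N0 by metis
  have vu: "v1 \<noteq> u"
  proof
    assume "v1 = u"
    hence vu': "(v,u) \<in> A" using a(3) by simp
    have "u2 \<in> N_l A (1+1) v" using N_trans[OF N1[OF vu'] N1[OF a(2)]] by simp
    note hh = this
    show False by (rule gA[OF assms(4) hh N1[OF a(4)]]) (use assms(1) in auto)
  qed
  obtain w i where w: "(u,w) \<in> A" "i < k" "v1 \<in> N_l A i w"
    using inT[OF D assms(3) V(3) _ vu] neg by blast
  have "w = u1 \<or> w = u2" using w ou unfolding out_nbrs_def by auto
  moreover have "w \<noteq> u2"
  proof
    assume "w = u2"
    hence "v1 \<in> N_l A i u2" using w by simp
    note hh = this
    show False by (rule gB[OF assms(4) a(3) a(4) ne(2) N00  hh]) (use w(2) assms(1) in auto)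
  qed
  ultimately have wu1: "w = u1" by simp
  define j where "j = i"
  have j0: "v1 \<in> N_l A j u1" using w wu1 unfolding j_def by simp
  have "j \<noteq> k - 1" using neg j0 by auto
  hence j2: "j \<le> k - 2" using w unfolding j_def by linarith
  have "j \<noteq> 0" using j0 N0 ne2 by metis
  hence j: "v1 \<in> N_l A j u1" "j \<le> k - 2" "j \<ge> 1" using j0 j2 by auto
  define m where "m = k - j"
  have m: "m \<ge> 2" "j + m = k" using j assms(1) unfolding m_def by auto
  have m2: "m - 2 + 2 = m" using m(1) by simp
  have "card (N_l A (m-2) v1) = 2^(m-2)" using card_N[OF D K R V(3)] m by auto
  hence "N_l A (m-2) v1 \<noteq> {}" by (intro notI) simp
  then obtain y where y: "y \<in> N_l A (m-2) v1" by blast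
  have yV: "y \<in> V" by (rule N_in_V[OF D V(3) y])
  have sub: "N_l A 2 y \<subseteq> insert u (outlier_set V A k u)"
  proof
    fix z assume z: "z \<in> N_l A 2 y"
    have zm: "z \<in> N_l A m v1" using N_trans[OF y z] by (simp only: m2)
    have zk: "z \<in> N_l A k u1" using N_trans[OF j(1) zm] m by simp
    have zV: "z \<in> V" by (rule N_in_V[OF D yV z])
    show "z \<in> insert u (outlier_set V A k u)"
    proof (rule ccontr)
      assume "z \<notin> insert u (outlier_set V A k u)"
      then obtain w' i' where w': "(u,w') \<in> A" "i' < k" "z \<in> N_l A i' w'"
        using inT[OF D assms(3) zV] by blast
      have "w' = u1 \<or> w' = u2" using w' ou unfolding out_nbrs_def by auto
      thus False
      proof
        assume "w' = u1"
        hence "z \<in> N_l A i' u1" using w' by simp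
        note hh = this
        show False by (rule gA[OF V(1) zk hh]) (use w'(2) in auto)
      next
        assume "w' = u2"
        hence "z \<in> N_l A i' u2" using w' by simp
        note hh = this
        show False by (rule gB[OF assms(4) a(3) a(4) ne(2) zm hh]) (use w'(2) m j in auto)
      qed
    qed
  qed
  have c4: "card (N_l A 2 y) = 4" using card_N[OF D K R yV] assms(1) by simp
  have fO: "finite (outlier_set V A k u)" "card (outlier_set V A k u) = 3"
    using card_O[OF G assms(3)] by auto
  have "card (insert u (outlier_set V A k u)) \<le> 4" using fO by (simp add: card_insert_if)
  hence eq: "N_l A 2 y = insert u (outlier_set V A k u)"
    using card_subset_eq[OF _ sub] fO c4 card_mono[OF _ sub] by (metis finite_insert le_antisym)
  have uy: "u \<in> N_l A 2 y" using eq by auto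
  have "u2 \<in> N_l A (1 + (m-2) + 2 + 1) v"
    using N_trans[OF N_trans[OF N_trans[OF N1[OF a(3)] y] uy] N1[OF a(2)]] .
  hence "\<not> (1 + (m-2) + 2 + 1 \<le> k)" using m by (auto intro: gA[OF assms(4) _ N1[OF a(4)]])
  hence "m + 2 > k" using m by simp
  hence j1: "j = 1" using m j by auto
  have "v \<notin> outlier_set V A k u"
  proof
    assume "v \<in> outlier_set V A k u"
    hence "v \<in> N_l A 2 y" using eq by auto
    hence "v \<in> N_l A (1 + (m-2) + 2) v" using N_trans[OF N_trans[OF N1[OF a(3)] y]] by blast
    note hh = this
    show False by (rule gA[OF assms(4) hh N00]) (use m j1 in auto)
  qed
  then obtain w' i' where w': "(u,w') \<in> A" "i' < k" "v \<in> N_l A i' w'"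
    using inT[OF D assms(3,4)] assms(5) by metis
  have "w' = u1 \<or> w' = u2" using w' ou unfolding out_nbrs_def by auto
  thus False
  proof
    assume "w' = u2"
    hence "v \<in> N_l A i' u2" using w' by simp
    hence "u2 \<in> N_l A (i'+1) u2" using N_trans[OF _ N1[OF a(4)]] by blast
    note hh = this
    show False by (rule gA[OF V(2) hh N00]) (use w'(2) in auto)
  next
    assume u1: "w' = u1"
    show False
    proof (cases "i' + 2 \<le> k")
      case True
      have "v \<in> N_l A i' u1" using w' u1 by simp
      hence "u2 \<in> N_l A (1 + i' + 1) u" using N_trans[OF N_trans[OF N1[OF a(1)]] N1[OF a(4)]] by blast
      note hh = this
      show False by (rule gA[OF assms(3) hh N1[OF a(2)]]) (use True in auto)
    next
      case False
      hence "i' = k - 1" using w' by auto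
      have "v \<in> N_l A i' u1" using w' u1 by simp
      hence "v1 \<in> N_l A (i' + 1) u1" using N_trans[OF _ N1[OF a(3)]] by blast
      note hh = this
      show False by (rule gA[OF V(1) hh j(1)]) (use j1 `i' = k - 1` assms(1) in auto)
    qed
  qed
qed


theorem corollary2:
  fixes V :: "'a set" and A :: "('a \<times> 'a) set" and k :: nat
    and u v u1 u2 v1 :: 'a
  assumes "k \<ge> 3"
    and "two_k_plus3_digraph V A k"
    and "u \<in> V" and "v \<in> V" and "u \<noteq> v"
    and "out_nbrs A u \<inter> out_nbrs A v = {u2}"
    and "out_nbrs A u = {u1, u2}"
    and "out_nbrs A v = {v1, u2}"
  shows "v1 \<in> N_l A (k - 1) u1 \<union> outlier_set V A k u
       \<and> u1 \<in> N_l A (k - 1) v1 \<union> outlier_set V A k v"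
proof
  show "v1 \<in> N_l A (k - 1) u1 \<union> outlier_set V A k u"
    by (rule half[OF assms])
  have "out_nbrs A v \<inter> out_nbrs A u = {u2}" using assms(6) by blast
  thus "u1 \<in> N_l A (k - 1) v1 \<union> outlier_set V A k v"
    by (rule half[OF assms(1,2,4,3) assms(5)[symmetric] _ assms(8,7)])
qed

end
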